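(* Assume $d/2<p<d$, let $U\sim N(0,I_d)$ and for $b\ge0$ define \[Q(b)=\int_{\{|x|\ge b\}}\frac{1}{|x|^p}\,\mathbb{E}\frac{1_{\{|x+U|\ge b\}}}{|x+U|^p}dx.\] Then \[\lim_{b\to\infty}b^{2p-d}Q(b)=\frac{d\omega_d}{2p-d}.\]
   Context: $\omega_d$ denotes the volume of the unit ball in $\mathbb{R}^d$; $N(0,I_d)$ is the standard $d$-dimensional normal distribution. *)

theory Defs
  imports "HOL-Analysis.Analysis"
begin

definition std_gauss_density :: "'a::euclidean_space \<Rightarrow> real" where
  "std_gauss_density u = (2 * pi) powr (- real DIM('a) / 2) * exp (- (norm u)\<^sup>2 / 2)"

definition std_normal_vec :: "'a::euclidean_space measure" where
  "std_normal_vec = density lborel (\<lambda>u. ennreal (std_gauss_density u))"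

definition Qfun :: "'a::euclidean_space itself \<Rightarrow> real \<Rightarrow> real \<Rightarrow> real" where
  "Qfun _ p b =
     (LINT x : {x::'a. norm x \<ge> b} | lborel.
        (1 / norm x powr p) *
        (LINT u | (std_normal_vec :: 'a measure).
            indicator {y::'a. norm y \<ge> b} (x + u) / norm (x + u) powr p))"

end

theory Submission
  imports Defs "HOL-Probability.Probability"
begin

lemma gauss_scaled:
  fixes u :: "'a::euclidean_space" and \<sigma> :: real
  assumes \<sigma>: "\<sigma> > 0"
  shows "(2*pi) powr (- real DIM('a)/2) * exp (-(norm u)\<^sup>2/(2*\<sigma>^2))
       = (\<Prod>b\<in>Basis. \<sigma> * normal_density 0 \<sigma> (u \<bullet> b))"
proof -
  have "(norm u)\<^sup>2 = (\<Sum>b\<in>Basis. (u\<bullet>b)\<^sup>2)"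
    unfolding power2_norm_eq_inner by (subst euclidean_inner) (simp add: power2_eq_square)
  hence e: "exp (-(norm u)\<^sup>2/(2*\<sigma>^2)) = (\<Prod>b\<in>Basis. exp (-(u\<bullet>b)\<^sup>2/(2*\<sigma>^2)))"
    by (simp add: exp_sum[symmetric] sum_negf sum_divide_distrib)
  have A1: "(0::real) < (2*pi) powr (-1/2)"
    by (rule powr_gt_zero[THEN iffD2]) simp
  have A3: "(2*pi) powr (-1/2) = 1 / sqrt (2*pi)"
  proof -
    have "(2*pi) powr (-1/2) = (2*pi) powr (-(1/2))" by simp
    also have "\<dots> = inverse ((2*pi) powr (1/2))" by (rule powr_minus)
    also have "\<dots> = inverse (sqrt (2*pi))" by (subst powr_half_sqrt) auto
    finally show ?thesis by (simp only: inverse_eq_divide)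
  qed
  have "(2*pi) powr (- real DIM('a)/2) = ((2*pi) powr (-1/2)) powr real DIM('a)"
    by (simp add: powr_powr)
  also have "\<dots> = ((2*pi) powr (-1/2)) ^ DIM('a)"
    by (rule powr_realpow[OF A1])
  also have "\<dots> = (1 / sqrt (2*pi)) ^ DIM('a)"
    by (simp only: A3)
  finally have c: "(2*pi) powr (- real DIM('a)/2) = (\<Prod>b\<in>(Basis::'a set). 1 / sqrt (2*pi))"
    by (simp only: prod_constant)
  have n: "\<sigma> * normal_density 0 \<sigma> t = 1 / sqrt (2*pi) * exp (-(t^2)/(2*\<sigma>^2))" for t
    using \<sigma> by (simp add: normal_density_def real_sqrt_mult)
  show ?thesis
    unfolding c e n prod.distrib by (rule refl)
qed

lemma gauss_prod:
  "std_gauss_density (u::'a::euclidean_space) = (\<Prod>b\<in>Basis. normal_density 0 1 (u \<bullet> b))"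
  using gauss_scaled[of 1 u] by (simp add: std_gauss_density_def)

lemma nn_integral_normal_density1:
  assumes "\<sigma> > 0"
  shows "(\<integral>\<^sup>+x. ennreal (\<sigma> * normal_density 0 \<sigma> x) \<partial>lborel) = ennreal \<sigma>"
proof -
  have "(\<integral>\<^sup>+x. ennreal (\<sigma> * normal_density 0 \<sigma> x) \<partial>lborel) = ennreal (\<integral>x. \<sigma> * normal_density 0 \<sigma> x \<partial>lborel)"
    using assms by (intro nn_integral_eq_integral) auto
  also have "\<dots> = ennreal \<sigma>" using assms by simp
  finally show ?thesis .
qed

lemma nn_integral_gauss_scaled:
  assumes \<sigma>: "\<sigma> > 0"
  shows "(\<integral>\<^sup>+u. ennreal ((2*pi) powr (- real DIM('a)/2) * exp (-(norm (u::'a::euclidean_space))\<^sup>2/(2*\<sigma>^2))) \<partial>lborel)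
     = ennreal (\<sigma> ^ DIM('a))"
proof -
  have "(\<integral>\<^sup>+u. ennreal ((2*pi) powr (- real DIM('a)/2) * exp (-(norm (u::'a))\<^sup>2/(2*\<sigma>^2))) \<partial>lborel)
     = (\<integral>\<^sup>+(u::'a). (\<Prod>b\<in>Basis. ennreal (\<sigma> * normal_density 0 \<sigma> (u \<bullet> b))) \<partial>lborel)"
    by (rule nn_integral_cong, subst gauss_scaled[OF \<sigma>], subst prod_ennreal) (auto simp: less_imp_le[OF \<sigma>])
  also have "\<dots> = (\<Prod>b\<in>(Basis::'a set). (\<integral>\<^sup>+x. ennreal (\<sigma> * normal_density 0 \<sigma> x) \<partial>lborel))"
    by (rule nn_integral_lborel_prod) auto
  also have "\<dots> = ennreal (\<sigma> ^ DIM('a))"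
    using \<sigma> by (simp add: nn_integral_normal_density1 ennreal_power)
  finally show ?thesis .
qed

lemma gauss_meas[measurable]: "std_gauss_density \<in> borel_measurable borel"
  unfolding std_gauss_density_def by measurable

lemma gauss_nonneg: "0 \<le> std_gauss_density u"
  by (simp add: std_gauss_density_def)

lemma gauss_integrable: "integrable lborel (std_gauss_density :: 'a::euclidean_space \<Rightarrow> real)"
proof -
  have "(\<integral>\<^sup>+u. ennreal (std_gauss_density (u::'a)) \<partial>lborel) = 1"
    using nn_integral_gauss_scaled[of 1, where 'a='a] by (simp add: std_gauss_density_def)
  thus ?thesis
    by (intro integrableI_nonneg) (auto simp: gauss_nonneg)
qed

lemma gauss_integral: "(\<integral>u. std_gauss_density (u::'a::euclidean_space) \<partial>lborel) = 1"
proof -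
  have "(\<integral>\<^sup>+u. ennreal (std_gauss_density (u::'a)) \<partial>lborel) = 1"
    using nn_integral_gauss_scaled[of 1, where 'a='a] by (simp add: std_gauss_density_def)
  moreover have "(\<integral>\<^sup>+u. ennreal (std_gauss_density (u::'a)) \<partial>lborel) = ennreal (\<integral>u. std_gauss_density (u::'a) \<partial>lborel)"
    by (intro nn_integral_eq_integral gauss_integrable) (auto simp: gauss_nonneg)
  ultimately show ?thesis
    by (metis ennreal_1 ennreal_inj integral_nonneg_AE gauss_nonneg AE_I2 zero_le_one)
qed

lemma gauss_exp_integrable:
  "integrable lborel (\<lambda>u::'a::euclidean_space. std_gauss_density u * exp ((norm u)\<^sup>2/4))"
proof -
  have eq: "std_gauss_density u * exp ((norm u)\<^sup>2/4) =
        (2*pi) powr (- real DIM('a)/2) * exp (-(norm u)\<^sup>2/(2*(sqrt 2)\<^sup>2))" for u :: 'a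
    by (simp add: std_gauss_density_def mult.assoc exp_add[symmetric])
  have "(\<integral>\<^sup>+u. ennreal (std_gauss_density (u::'a) * exp ((norm u)\<^sup>2/4)) \<partial>lborel) < \<infinity>"
    unfolding eq by (subst nn_integral_gauss_scaled) auto
  thus ?thesis
    by (intro integrableI_nonneg) (auto simp: gauss_nonneg)
qed

lemma exp_ge_pow:
  fixes x :: real assumes "0 \<le> x" shows "x^n / fact n \<le> exp x"
proof -
  have s: "summable (\<lambda>m. x^m /\<^sub>R fact m)" by (rule summable_exp_generic)
  have "(\<Sum>m\<in>{n}. x^m /\<^sub>R fact m) \<le> (\<Sum>m. x^m /\<^sub>R fact m)"
    by (rule sum_le_suminf[OF s]) (auto simp: assms)
  thus ?thesis by (simp add: exp_def divide_inverse mult.commute)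
qed

lemma exp_neg_bound:
  fixes r p :: real and n :: nat
  assumes r: "1 \<le> r" and p: "p \<le> 2 * real n"
  shows "exp (-(r^2/16)) \<le> fact n * 16^n * r powr (-p)"
proof -
  have "(r^2/16)^n / fact n \<le> exp (r^2/16)" by (rule exp_ge_pow) simp
  moreover have "r^(2*n) = (r^2)^n" by (simp add: power_mult)
  ultimately have "r^(2*n) \<le> fact n * 16^n * exp (r^2/16)"
    by (simp add: power_divide field_simps)
  hence "exp (-(r^2/16)) * r^(2*n) \<le> fact n * 16^n"
    by (simp add: exp_minus field_simps)
  moreover have "r powr p \<le> r^(2*n)"
    using r p by (metis powr_mono powr_realpow of_nat_mult of_nat_numeral
          less_le_trans zero_less_one)
  ultimately have "exp (-(r^2/16)) * r powr p \<le> fact n * 16^n"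
    by (meson exp_ge_zero mult_left_mono order_trans)
  thus ?thesis using r by (simp add: powr_minus field_simps)
qed

definition G :: "real \<Rightarrow> real \<Rightarrow> 'a::euclidean_space \<Rightarrow> real" where
  "G p b y = indicator {y. b \<le> norm y} y / norm y powr p"

lemma G_meas[measurable]: "G p b \<in> borel_measurable borel"
  unfolding G_def by measurable

lemma G_nonneg: "0 \<le> G p b y"
  by (simp add: G_def)

lemma G1_eq: "G p 1 y = (if 1 \<le> norm y then norm y powr (-p) else 0)"
  by (simp add: G_def powr_minus divide_inverse)

lemma G1_le1: "0 \<le> p \<Longrightarrow> G p 1 y \<le> 1"
  using ge_one_powr_ge_zero[of "norm y" p] by (auto simp: G1_eq powr_minus inverse_le_1_iff)

lemma G_scale:
  assumes b: "b > 0"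
  shows "G p b (b *\<^sub>R z) = b powr (-p) * G p 1 z"
  using b by (auto simp: G_def powr_mult powr_minus divide_inverse abs_of_pos split: split_indicator)

lemma G1_shift_bound:
  assumes p: "0 < p" and b: "1 \<le> b" and y: "1 \<le> norm y"
  shows "G p 1 (y + (1/b) *\<^sub>R u) \<le> 2 powr p * norm y powr (-p) + exp ((norm u)^2/4) * exp (-((norm y)^2/16))"
proof (cases "norm u \<le> norm y / 2")
  case True
  define z where "z = y + (1/b) *\<^sub>R u"
  have "norm ((1/b) *\<^sub>R u) \<le> norm u" using b mult_right_mono[of 1 b "norm u"] by (simp add: field_simps)
  moreover have "norm y - norm ((1/b) *\<^sub>R u) \<le> norm z"
    unfolding z_def by (rule norm_diff_ineq)
  ultimately have z: "norm y / 2 \<le> norm z" using True by simp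
  have ny: "0 < norm y / 2" using y by linarith
  have "G p 1 z \<le> 2 powr p * norm y powr (-p)"
  proof (cases "1 \<le> norm z")
    case True
    then have "G p 1 z = norm z powr (-p)" by (simp add: G1_eq)
    also have "\<dots> \<le> (norm y / 2) powr (-p)"
      by (rule powr_mono2') (use p ny z in auto)
    also have "\<dots> = 2 powr p * norm y powr (-p)"
      by (simp add: powr_divide powr_minus field_simps)
    finally show ?thesis .
  next
    case False
    then show ?thesis by (simp add: G1_eq)
  qed
  then show ?thesis unfolding z_def
    by (smt (verit) exp_ge_zero mult_nonneg_nonneg)
next
  case False
  have "(norm y / 2)^2 \<le> (norm u)^2"
    using False y by (intro power_mono) auto
  hence "0 \<le> (norm u)^2/4 + (-((norm y)^2/16))" by (simp add: power_divide)
  hence "1 \<le> exp ((norm u)^2/4) * exp (-((norm y)^2/16))"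
    by (simp add: exp_add[symmetric] del: exp_add)
  moreover have "G p 1 (y + (1/b) *\<^sub>R u) \<le> 1" using p by (simp add: G1_le1)
  moreover have "0 \<le> 2 powr p * norm y powr (-p)" by simp
  ultimately show ?thesis by linarith
qed

lemma inv_tendsto: fixes y u :: "'a::real_normed_vector" shows "((\<lambda>b::real. y + (1/b) *\<^sub>R u) \<longlongrightarrow> y) at_top"
proof -
  have "((\<lambda>b::real. 1/b) \<longlongrightarrow> 0) at_top"
    by (rule tendsto_divide_0[OF tendsto_const filterlim_at_top_imp_at_infinity[OF filterlim_ident]])
  hence "((\<lambda>b::real. y + (1/b) *\<^sub>R u) \<longlongrightarrow> y + 0 *\<^sub>R u) at_top"
    by (intro tendsto_intros)
  thus ?thesis by simp
qed

lemma G1_lim: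
  assumes "norm y \<noteq> 1"
  shows "((\<lambda>b. G p 1 (y + (1/b) *\<^sub>R u)) \<longlongrightarrow> G p 1 y) at_top"
proof (cases "norm y < 1")
  case True
  have "\<forall>\<^sub>F b in at_top. norm (y + (1/b) *\<^sub>R u) < 1"
    using order_tendstoD(2)[OF tendsto_norm[OF inv_tendsto] True] .
  hence "\<forall>\<^sub>F b in at_top. 0 = G p 1 (y + (1/b) *\<^sub>R u)"
    by eventually_elim (simp add: G1_eq)
  moreover have "G p 1 y = 0" using True by (simp add: G1_eq)
  ultimately show ?thesis by (auto intro: tendsto_eventually)
next
  case False
  hence y1: "1 < norm y" using assms by simp
  have "\<forall>\<^sub>F b in at_top. 1 < norm (y + (1/b) *\<^sub>R u)"
    using order_tendstoD(1)[OF tendsto_norm[OF inv_tendsto] y1] .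
  hence ev: "\<forall>\<^sub>F b in at_top. norm (y + (1/b) *\<^sub>R u) powr (-p) = G p 1 (y + (1/b) *\<^sub>R u)"
    by eventually_elim (simp add: G1_eq)
  have "((\<lambda>b. norm (y + (1/b) *\<^sub>R u) powr (-p)) \<longlongrightarrow> norm y powr (-p)) at_top"
    by (rule tendsto_powr[OF tendsto_norm[OF inv_tendsto] tendsto_const]) (use y1 in auto)
  hence "((\<lambda>b. G p 1 (y + (1/b) *\<^sub>R u)) \<longlongrightarrow> norm y powr (-p)) at_top"
    using tendsto_cong[OF ev] by simp
  thus ?thesis using y1 by (simp add: G1_eq)
qed

definition K :: "real \<Rightarrow> real \<Rightarrow> 'a::euclidean_space \<Rightarrow> real" where
  "K p b y = (\<integral>u. std_gauss_density u * G p 1 (y + (1/b) *\<^sub>R u) \<partial>lborel)"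

lemma K_meas[measurable]: "K p b \<in> borel_measurable borel"
  unfolding K_def by measurable

lemma gG_integrable:
  assumes "0 \<le> p"
  shows "integrable lborel (\<lambda>u::'a::euclidean_space. std_gauss_density u * G p 1 (y + c *\<^sub>R u))"
proof (rule Bochner_Integration.integrable_bound[OF gauss_integrable])
  show "AE u in lborel. norm (std_gauss_density u * G p 1 (y + c *\<^sub>R u)) \<le> norm (std_gauss_density (u::'a))"
    using assms by (intro AE_I2) (auto simp: gauss_nonneg G_nonneg abs_mult intro!: mult_left_le G1_le1)
qed measurable

lemma K_nonneg: "0 \<le> K p b y"
  unfolding K_def by (intro integral_nonneg_AE AE_I2) (simp add: gauss_nonneg G_nonneg)

definition Egauss :: "'a::euclidean_space itself \<Rightarrow> real" where
  "Egauss _ = (\<integral>u. std_gauss_density (u::'a) * exp ((norm u)^2/4) \<partial>lborel)"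

lemma Egauss_nonneg: "0 \<le> Egauss TYPE('a::euclidean_space)"
  unfolding Egauss_def by (intro integral_nonneg_AE AE_I2) (simp add: gauss_nonneg)

lemma K_bound:
  fixes y :: "'a::euclidean_space"
  assumes p: "0 < p" and b: "1 \<le> b" and y: "1 \<le> norm y"
  shows "K p b y \<le> 2 powr p * norm y powr (-p) + Egauss TYPE('a) * exp (-((norm y)^2/16))"
proof -
  let ?A = "2 powr p * norm y powr (-p)" and ?B = "exp (-((norm y)^2/16))"
  have "K p b y \<le> (\<integral>u. ?A * std_gauss_density u + (std_gauss_density (u::'a) * exp ((norm u)^2/4)) * ?B \<partial>lborel)"
    unfolding K_def
  proof (rule integral_mono)
    show "integrable lborel (\<lambda>u::'a. std_gauss_density u * G p 1 (y + (1/b) *\<^sub>R u))"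
      using p by (intro gG_integrable) auto
    show "integrable lborel (\<lambda>u::'a. ?A * std_gauss_density u + (std_gauss_density u * exp ((norm u)^2/4)) * ?B)"
      by (intro Bochner_Integration.integrable_add integrable_mult_right integrable_mult_left
            gauss_integrable gauss_exp_integrable)
    fix u :: 'a
    have "std_gauss_density u * G p 1 (y + (1/b) *\<^sub>R u) \<le> std_gauss_density u * (?A + exp ((norm u)^2/4) * ?B)"
      by (intro mult_left_mono G1_shift_bound p b y gauss_nonneg)
    thus "std_gauss_density u * G p 1 (y + (1/b) *\<^sub>R u) \<le> ?A * std_gauss_density u + (std_gauss_density u * exp ((norm u)^2/4)) * ?B"
      by (simp add: algebra_simps)
  qed
  also have "\<dots> = ?A * (\<integral>u. std_gauss_density (u::'a) \<partial>lborel) + Egauss TYPE('a) * ?B"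
    unfolding Egauss_def
    by (subst Bochner_Integration.integral_add)
       (auto intro!: integrable_mult_right integrable_mult_left gauss_integrable gauss_exp_integrable)
  finally show ?thesis by (simp add: gauss_integral)
qed

lemma K_bound2:
  fixes y :: "'a::euclidean_space"
  assumes p: "0 < p" "p \<le> 2 * real DIM('a)" and b: "1 \<le> b" and y: "1 \<le> norm y"
  shows "K p b y \<le> (2 powr p + Egauss TYPE('a) * (fact DIM('a) * 16 ^ DIM('a))) * norm y powr (-p)"
proof -
  have "exp (-((norm y)^2/16)) \<le> fact DIM('a) * 16 ^ DIM('a) * norm y powr (-p)"
    by (rule exp_neg_bound) (use y p in auto)
  hence "Egauss TYPE('a) * exp (-((norm y)^2/16)) \<le> Egauss TYPE('a) * (fact DIM('a) * 16 ^ DIM('a) * norm y powr (-p))"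
    by (intro mult_left_mono Egauss_nonneg)
  with K_bound[OF p(1) b y] show ?thesis by (simp add: algebra_simps)
qed

lemma K_lim:
  fixes y :: "'a::euclidean_space"
  assumes y: "norm y \<noteq> 1" and p: "0 \<le> p"
  shows "((\<lambda>b. K p b y) \<longlongrightarrow> G p 1 y) at_top"
proof -
  have "((\<lambda>b. \<integral>u. std_gauss_density u * G p 1 (y + (1/b) *\<^sub>R u) \<partial>lborel)
        \<longlongrightarrow> (\<integral>u. std_gauss_density (u::'a) * G p 1 y \<partial>lborel)) at_top"
  proof (rule integral_dominated_convergence_at_top[where w = std_gauss_density])
    show "AE u in lborel. ((\<lambda>b. std_gauss_density u * G p 1 (y + (1/b) *\<^sub>R u)) \<longlongrightarrow> std_gauss_density u * G p 1 y) at_top"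
      by (intro AE_I2 tendsto_mult tendsto_const G1_lim y)
    show "\<forall>\<^sub>F b in at_top. AE u in lborel. norm (std_gauss_density u * G p 1 (y + (1/b) *\<^sub>R u)) \<le> std_gauss_density u"
      using p by (intro always_eventually allI AE_I2)
         (auto simp: gauss_nonneg G_nonneg abs_mult intro!: mult_left_le G1_le1)
  qed (auto simp: gauss_integrable)
  thus ?thesis by (simp add: K_def gauss_integral)
qed

lemma h_eq: "G p 1 y * G p 1 y = (if 1 \<le> norm y then norm y powr (-2*p) else 0)"
  by (simp add: G1_eq powr_add[symmetric])

lemma h_le1: "0 \<le> p \<Longrightarrow> G p 1 y * G p 1 y \<le> 1"
  using G1_le1[of p y] G_nonneg[of p 1 y] by (simp add: mult_le_one)

lemma powr_level:
  fixes t r p :: real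
  assumes t: "0 < t" and r: "0 < r" and p: "0 < p"
  shows "t < r powr (-2*p) \<longleftrightarrow> r < t powr (-1/(2*p))"
proof -
  have "t < r powr (-2*p) \<longleftrightarrow> ln t < ln (r powr (-2*p))"
    by (subst ln_less_cancel_iff) (use t r in auto)
  also have "\<dots> \<longleftrightarrow> ln t < -2*p * ln r" using r by (simp add: ln_powr)
  also have "\<dots> \<longleftrightarrow> ln r < -1/(2*p) * ln t" using p by (auto simp: field_simps)
  also have "\<dots> \<longleftrightarrow> ln r < ln (t powr (-1/(2*p)))" using t by (simp add: ln_powr)
  also have "\<dots> \<longleftrightarrow> r < t powr (-1/(2*p))"
    by (subst ln_less_cancel_iff) (use t r in auto)
  finally show ?thesis .
qed

lemma level_set:
  fixes t p :: real
  assumes t: "0 < t" "t < 1" and p: "0 < p"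
  shows "{y::'a::euclidean_space. t < G p 1 y * G p 1 y} = ball 0 (t powr (-1/(2*p))) - ball 0 1"
proof (intro set_eqI iffI)
  fix y :: 'a
  assume "y \<in> {y. t < G p 1 y * G p 1 y}"
  hence *: "t < G p 1 y * G p 1 y" by simp
  then have y1: "1 \<le> norm y" using t by (auto simp: h_eq split: if_splits)
  with * have "t < norm y powr (-2*p)" by (simp add: h_eq)
  moreover have "y \<noteq> 0" using y1 by auto
  ultimately have "norm y < t powr (-1/(2*p))" using powr_level[OF t(1) _ p, of "norm y"] by simp
  with y1 show "y \<in> ball 0 (t powr (-1/(2*p))) - ball 0 1" by auto
next
  fix y :: 'a
  assume "y \<in> ball 0 (t powr (-1/(2*p))) - ball 0 1"
  hence y1: "1 \<le> norm y" and "norm y < t powr (-1/(2*p))" by auto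
  moreover have "y \<noteq> 0" using y1 by auto
  ultimately have "t < norm y powr (-2*p)" using powr_level[OF t(1) _ p, of "norm y"] by simp
  with y1 show "y \<in> {y. t < G p 1 y * G p 1 y}" by (simp add: h_eq)
qed

lemma inner_level:
  fixes t p :: real
  assumes p: "real DIM('a::euclidean_space) < 2*p"
  shows "(\<integral>\<^sup>+y. indicator {0<..<G p 1 y * G p 1 y} t \<partial>(lborel::'a measure)) =
     (if 0 < t \<and> t < 1 then ennreal (unit_ball_vol (real DIM('a)) * (t powr (- real DIM('a)/(2*p)) - 1)) else 0)"
proof -
  have p0: "0 < p" using p DIM_positive[where 'a='a] by linarith
  show ?thesis
  proof (cases "0 < t \<and> t < 1")
    case False
    have "indicator {0<..<G p 1 y * G p 1 y} t = (0::ennreal)" for y :: 'a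
      using False h_le1[of p y] p0 by (auto simp: indicator_def)
    then have "(\<integral>\<^sup>+y. indicator {0<..<G p 1 y * G p 1 y} t \<partial>(lborel::'a measure)) = 0" by simp
    then show ?thesis using False by (simp only: if_False)
  next
    case True
    define R where "R = t powr (-1/(2*p))"
    have R1: "1 \<le> R"
    proof -
      have "t < 1 powr (-2*p)" using True by simp
      hence "1 < R" unfolding R_def using powr_level[of t 1 p] True p0 by simp
      thus ?thesis by simp
    qed
    have "(\<integral>\<^sup>+y. indicator {0<..<G p 1 y * G p 1 y} t \<partial>(lborel::'a measure)) =
          (\<integral>\<^sup>+y. indicator (ball 0 R - ball 0 1) y \<partial>(lborel::'a measure))"
    proof (rule nn_integral_cong)
      fix y :: 'a
      have "t \<in> {0<..<G p 1 y * G p 1 y} \<longleftrightarrow> y \<in> {y::'a. t < G p 1 y * G p 1 y}" using True by auto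
      also have "\<dots> \<longleftrightarrow> y \<in> ball 0 R - ball 0 1" unfolding R_def by (subst level_set[symmetric]) (use True p0 in auto)
      finally show "indicator {0<..<G p 1 y * G p 1 y} t = (indicator (ball 0 R - ball 0 1) y :: ennreal)"
        by (simp add: indicator_def)
    qed
    also have "\<dots> = emeasure lborel (ball (0::'a) R - ball 0 1)"
      by (rule nn_integral_indicator) simp
    also have "\<dots> = emeasure lborel (ball (0::'a) R) - emeasure lborel (ball (0::'a) 1)"
      by (rule emeasure_Diff) (use R1 emeasure_lborel_ball_finite[of "0::'a" 1] in auto)
    also have "\<dots> = ennreal (unit_ball_vol (real DIM('a)) * R ^ DIM('a)) - ennreal (unit_ball_vol (real DIM('a)))"
      using R1 by (simp add: emeasure_ball)
    also have "\<dots> = ennreal (unit_ball_vol (real DIM('a)) * R ^ DIM('a) - unit_ball_vol (real DIM('a)))"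
      by (rule ennreal_minus) (use R1 in \<open>auto intro!: one_le_power\<close>)
    also have "R ^ DIM('a) = t powr (- real DIM('a)/(2*p))"
    proof -
      have "R ^ DIM('a) = R powr real DIM('a)" using R1 by (simp add: powr_realpow)
      also have "\<dots> = t powr (- real DIM('a)/(2*p))" unfolding R_def by (simp add: powr_powr)
      finally show ?thesis .
    qed
    finally show ?thesis using True by (simp add: algebra_simps)
  qed
qed

lemma powr_neg_ge1:
  fixes t a :: real assumes "0 < t" "t \<le> 1" "0 \<le> a" shows "1 \<le> t powr (-a)"
proof -
  have "t powr a \<le> 1" using assms by (intro powr_le1) auto
  moreover have "0 < t powr a" using assms by simp
  ultimately show ?thesis by (simp add: powr_minus one_le_inverse)
qed

lemma h_meas: "(\<lambda>(t, y). indicator {0<..<G p 1 y * G p 1 y} t :: ennreal)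
     \<in> borel_measurable ((lborel::real measure) \<Otimes>\<^sub>M (lborel::'a::euclidean_space measure))"
  unfolding indicator_def by (simp add: case_prod_beta) measurable

lemma A_nn:
  assumes p: "real DIM('a) < 2*p"
  shows "(\<integral>\<^sup>+y. ennreal (G p 1 (y::'a::euclidean_space) * G p 1 y) \<partial>lborel)
       = ennreal (real DIM('a) * unit_ball_vol (real DIM('a)) / (2*p - real DIM('a)))"
proof -
  define V where "V = unit_ball_vol (real DIM('a))"
  define a where "a = real DIM('a)/(2*p)"
  have p0: "0 < p" using p DIM_positive[where 'a='a] by linarith
  have a0: "0 < a" and a1: "a < 1" using p p0 unfolding a_def by (auto simp: field_simps)
  have V0: "0 \<le> V" unfolding V_def by simp
  have "(\<integral>\<^sup>+y. ennreal (G p 1 (y::'a) * G p 1 y) \<partial>lborel)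
      = (\<integral>\<^sup>+y. \<integral>\<^sup>+t. indicator {0<..<G p 1 y * G p 1 y} t \<partial>lborel \<partial>(lborel::'a measure))"
  proof (rule nn_integral_cong)
    fix y :: 'a
    have "0 \<le> G p 1 y * G p 1 y" by (simp add: G_nonneg)
    thus "ennreal (G p 1 y * G p 1 y) = (\<integral>\<^sup>+t. indicator {0<..<G p 1 y * G p 1 y} t \<partial>lborel)"
      by (subst nn_integral_indicator) (auto simp: emeasure_lborel_Ioo)
  qed
  also have "\<dots> = (\<integral>\<^sup>+t. \<integral>\<^sup>+y. indicator {0<..<G p 1 y * G p 1 y} t \<partial>(lborel::'a measure) \<partial>lborel)"
    by (rule lborel_pair.Fubini'[OF h_meas])
  also have "\<dots> = (\<integral>\<^sup>+t. ennreal (V * (t powr (-a) - 1)) * indicator {0<..<1} t \<partial>lborel)"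
    by (rule nn_integral_cong) (simp add: inner_level[OF p] V_def a_def split: split_indicator)
  also have "\<dots> = ennreal (V * (1/(1-a) - 1))"
  proof (rule nn_integral_has_integral_lebesgue')
    show "\<And>t. t \<in> {0<..<1} \<Longrightarrow> 0 \<le> V * (t powr (-a) - 1)"
      using V0 a0 by (auto intro!: mult_nonneg_nonneg powr_neg_ge1)
    have h1: "((\<lambda>t. t powr (-a)) has_integral (1 powr (-a+1) / (-a+1))) {0..1}"
      by (rule has_integral_powr_from_0) (use a1 in auto)
    have h2: "((\<lambda>t. 1) has_integral 1) {0..(1::real)}"
      using has_integral_const_real[of 1 0 1] by simp
    have "((\<lambda>t. V * (t powr (-a) - 1)) has_integral V * (1/(1-a) - 1)) {0..1}"
      using has_integral_cmul[OF has_integral_diff[OF h1 h2], of V] by (simp add: field_simps)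
    thus "((\<lambda>t. V * (t powr (-a) - 1)) has_integral V * (1/(1-a) - 1)) {0<..<1}"
      by (simp add: has_integral_Icc_iff_Ioo)
  qed
  also have "V * (1/(1-a) - 1) = real DIM('a) * V / (2*p - real DIM('a))"
    using a1 p p0 unfolding a_def by (simp add: field_simps)
  finally show ?thesis unfolding V_def .
qed

lemma A_int:
  assumes p: "real DIM('a) < 2*p"
  shows "integrable lborel (\<lambda>y::'a::euclidean_space. G p 1 y * G p 1 y)"
    and "(\<integral>y. G p 1 (y::'a) * G p 1 y \<partial>lborel) = real DIM('a) * unit_ball_vol (real DIM('a)) / (2*p - real DIM('a))"
proof -
  have p0: "0 < 2*p - real DIM('a)" using p by simp
  show int: "integrable lborel (\<lambda>y::'a::euclidean_space. G p 1 y * G p 1 y)"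
    by (intro integrableI_nonneg) (auto simp: A_nn[OF p] G_nonneg)
  have "ennreal (\<integral>y. G p 1 (y::'a) * G p 1 y \<partial>lborel) = ennreal (real DIM('a) * unit_ball_vol (real DIM('a)) / (2*p - real DIM('a)))"
    by (subst nn_integral_eq_integral[OF int, symmetric]) (auto simp: A_nn[OF p] G_nonneg)
  moreover have "0 \<le> real DIM('a) * unit_ball_vol (real DIM('a)) / (2*p - real DIM('a))"
    using p0 by simp
  moreover have "0 \<le> (\<integral>y. G p 1 (y::'a) * G p 1 y \<partial>lborel)"
    by (intro integral_nonneg_AE AE_I2) (simp add: G_nonneg)
  ultimately show "(\<integral>y. G p 1 (y::'a) * G p 1 y \<partial>lborel) = real DIM('a) * unit_ball_vol (real DIM('a)) / (2*p - real DIM('a))"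
    by (simp add: ennreal_inj)
qed

lemma AE_not_sphere: "AE y in (lborel::'a::euclidean_space measure). norm y \<noteq> 1"
proof -
  from negligible_sphere[of "0::'a" 1] have "sphere (0::'a) 1 \<in> null_sets lborel"
    by (auto simp: null_sets_completion_iff negligible_iff_null_sets negligible_convex_frontier)
  from AE_not_in[OF this] show ?thesis by simp
qed

lemma scale_integral:
  fixes F :: "'a::euclidean_space \<Rightarrow> real"
  assumes b: "b > 0" and F[measurable]: "F \<in> borel_measurable borel"
  shows "(\<integral>x. F x \<partial>lborel) = b ^ DIM('a) * (\<integral>y. F (b *\<^sub>R y) \<partial>lborel)"
proof -
  have L: "lborel = density (distr lborel borel (\<lambda>x::'a. 0 + b *\<^sub>R x)) (\<lambda>_. \<bar>b\<bar>^DIM('a))"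
    by (rule lborel_affine) (use b in auto)
  have "(\<integral>x. F x \<partial>lborel) = (\<integral>x. F x \<partial>density (distr lborel borel (\<lambda>x::'a. 0 + b *\<^sub>R x)) (\<lambda>_. \<bar>b\<bar>^DIM('a)))"
    by (subst L[symmetric]) (rule refl)
  also have "\<dots> = (\<integral>x. \<bar>b\<bar>^DIM('a) *\<^sub>R F x \<partial>(distr lborel borel (\<lambda>x::'a. 0 + b *\<^sub>R x)))"
    by (rule integral_density) auto
  also have "\<dots> = (\<integral>y. \<bar>b\<bar>^DIM('a) *\<^sub>R F (0 + b *\<^sub>R y) \<partial>lborel)"
    by (rule integral_distr) auto
  also have "\<dots> = b ^ DIM('a) * (\<integral>y. F (b *\<^sub>R y) \<partial>lborel)"
    using b by simp
  finally show ?thesis .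
qed

lemma Phi_lim:
  assumes p1: "real DIM('a::euclidean_space) < 2*p" and p2: "p < real DIM('a)"
  shows "((\<lambda>b. \<integral>y. G p 1 (y::'a) * K p b y \<partial>lborel) \<longlongrightarrow> (\<integral>y. G p 1 (y::'a) * G p 1 y \<partial>lborel)) at_top"
proof -
  define C where "C = 2 powr p + Egauss TYPE('a) * (fact DIM('a) * 16 ^ DIM('a))"
  have p0: "0 < p" using p1 DIM_positive[where 'a='a] by linarith
  show ?thesis
  proof (rule integral_dominated_convergence_at_top[where w="\<lambda>y. C * (G p 1 y * G p 1 y)"])
    show "AE y in lborel. ((\<lambda>b. G p 1 y * K p b y) \<longlongrightarrow> G p 1 y * G p 1 (y::'a)) at_top"
      using AE_not_sphere
    proof eventually_elim
      case (elim y)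
      show ?case by (intro tendsto_mult tendsto_const K_lim) (use p0 elim in auto)
    qed
    show "\<forall>\<^sub>F b in at_top. AE y in lborel. norm (G p 1 y * K p b y) \<le> C * (G p 1 y * G p 1 (y::'a))"
      using eventually_ge_at_top[of "1::real"]
    proof eventually_elim
      case (elim b)
      show ?case
      proof (intro AE_I2)
        fix y :: 'a
        show "norm (G p 1 y * K p b y) \<le> C * (G p 1 y * G p 1 y)"
        proof (cases "1 \<le> norm y")
          case True
          have "K p b y \<le> C * norm y powr (-p)" unfolding C_def
            by (rule K_bound2) (use p0 p2 elim True in auto)
          hence "G p 1 y * K p b y \<le> G p 1 y * (C * G p 1 y)"
            using True by (intro mult_left_mono) (auto simp: G1_eq)
          thus ?thesis by (simp add: G_nonneg K_nonneg abs_mult mult_ac)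
        next
          case False thus ?thesis by (simp add: G1_eq)
        qed
      qed
    qed
    show "integrable lborel (\<lambda>y::'a. C * (G p 1 y * G p 1 y))"
      by (intro integrable_mult_right A_int(1) p1)
  qed measurable
qed

lemma Qfun_eq:
  assumes b: "1 \<le> b" and p: "0 \<le> p"
  shows "b powr (2*p - real DIM('a)) * Qfun TYPE('a) p b = (\<integral>y. G p 1 (y::'a::euclidean_space) * K p b y \<partial>lborel)"
proof -
  have b0: "0 < b" using b by simp
  have inner: "(LINT u | (std_normal_vec::'a measure). indicator {y. b \<le> norm y} (x + u) / norm (x + u) powr p)
      = (\<integral>u. std_gauss_density u * G p b (x + u) \<partial>lborel)" for x :: 'a
  proof -
    have "(LINT u | (std_normal_vec::'a measure). indicator {y. b \<le> norm y} (x + u) / norm (x + u) powr p)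
       = (\<integral>u. std_gauss_density u *\<^sub>R (indicator {y. b \<le> norm y} (x + u) / norm (x + u) powr p) \<partial>lborel)"
      unfolding std_normal_vec_def by (rule integral_density) (auto simp: gauss_nonneg)
    thus ?thesis by (simp add: G_def)
  qed
  have "Qfun TYPE('a) p b = (\<integral>x. G p b (x::'a) * (\<integral>u. std_gauss_density u * G p b (x + u) \<partial>lborel) \<partial>lborel)"
    unfolding Qfun_def set_lebesgue_integral_def by (intro Bochner_Integration.integral_cong refl) (simp add: inner G_def)
  also have "\<dots> = b ^ DIM('a) * (\<integral>y. G p b (b *\<^sub>R (y::'a)) * (\<integral>u. std_gauss_density u * G p b (b *\<^sub>R y + u) \<partial>lborel) \<partial>lborel)"
    by (rule scale_integral[OF b0]) measurable
  also have "(\<lambda>y. G p b (b *\<^sub>R y) * (\<integral>u. std_gauss_density u * G p b (b *\<^sub>R y + u) \<partial>lborel))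
      = (\<lambda>y::'a. (b powr (-p) * b powr (-p)) * (G p 1 y * K p b y))"
  proof
    fix y :: 'a
    have "b *\<^sub>R y + u = b *\<^sub>R (y + (1/b) *\<^sub>R u)" for u :: 'a
      using b0 by (simp add: scaleR_add_right)
    hence "(\<integral>u. std_gauss_density u * G p b (b *\<^sub>R y + u) \<partial>lborel)
        = (\<integral>u. b powr (-p) * (std_gauss_density u * G p 1 (y + (1/b) *\<^sub>R u)) \<partial>lborel)"
      by (simp add: G_scale[OF b0] mult_ac)
    also have "\<dots> = b powr (-p) * K p b y" unfolding K_def by simp
    finally show "G p b (b *\<^sub>R y) * (\<integral>u. std_gauss_density u * G p b (b *\<^sub>R y + u) \<partial>lborel)
      = (b powr (-p) * b powr (-p)) * (G p 1 y * K p b y)"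
      by (simp add: G_scale[OF b0] mult_ac)
  qed
  also have "(\<integral>y. (b powr (-p) * b powr (-p)) * (G p 1 (y::'a) * K p b y) \<partial>lborel)
     = (b powr (-p) * b powr (-p)) * (\<integral>y. G p 1 (y::'a) * K p b y \<partial>lborel)"
    by simp
  finally have Q: "Qfun TYPE('a) p b = b ^ DIM('a) * ((b powr (-p) * b powr (-p)) * (\<integral>y. G p 1 (y::'a) * K p b y \<partial>lborel))" .
  have "b powr (2*p - real DIM('a)) * (b ^ DIM('a) * (b powr (-p) * b powr (-p)))
      = b powr (2*p - real DIM('a)) * (b powr real DIM('a) * (b powr (-p) * b powr (-p)))"
    by (simp only: powr_realpow[OF b0])
  also have "\<dots> = b powr ((2*p - real DIM('a)) + real DIM('a) + (-p) + (-p))"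
    by (simp only: powr_add mult.assoc)
  also have "\<dots> = 1" using b0 by simp
  finally show ?thesis unfolding Q by (simp add: mult.assoc[symmetric])
qed

lemma measure_ball1: "measure lborel (ball (0::'a::euclidean_space) 1) = unit_ball_vol (real DIM('a))"
  by (simp add: measure_def emeasure_ball)

theorem lemma6p4:
  fixes p :: real
  assumes "real DIM('a::euclidean_space) / 2 < p" and "p < real DIM('a)"
  shows "((\<lambda>b. b powr (2 * p - real DIM('a)) * Qfun TYPE('a) p b)
           \<longlongrightarrow> real DIM('a) * measure lborel (ball (0::'a) 1) / (2 * p - real DIM('a)))
         at_top"
proof -
  have p1: "real DIM('a) < 2*p" using assms(1) by simp
  have p0: "0 \<le> p" using p1 DIM_positive[where 'a='a] by linarith
  have lim: "((\<lambda>b. \<integral>y. G p 1 (y::'a) * K p b y \<partial>lborel)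
      \<longlongrightarrow> real DIM('a) * measure lborel (ball (0::'a) 1) / (2 * p - real DIM('a))) at_top"
    using Phi_lim[OF p1 assms(2)] unfolding A_int(2)[OF p1] measure_ball1 .
  have "\<forall>\<^sub>F b in at_top. (\<integral>y. G p 1 (y::'a) * K p b y \<partial>lborel) = b powr (2 * p - real DIM('a)) * Qfun TYPE('a) p b"
    using eventually_ge_at_top[of "1::real"] by eventually_elim (rule Qfun_eq[symmetric, OF _ p0])
  from tendsto_cong[OF this] lim show ?thesis by simp
qed

end
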